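(* Let $\mathcal{A}=\mathcal{R}*_K\mathcal{S}*_L\mathcal{T}\in\mathbb{C}^{I_1\times\cdots\times I_N\times J_1\times\cdots\times J_M}$, where $\mathcal{R}\in\mathbb{C}^{I_1\times\cdots\times I_N\times H_1\times\cdots\times H_K}$, $\mathcal{S}\in\mathbb{C}^{H_1\times\cdots\times H_K\times G_1\times\cdots\times G_L}$ and $\mathcal{T}\in\mathbb{C}^{G_1\times\cdots\times G_L\times J_1\times\cdots\times J_M}$. Then $\mathcal{A}_{\pi\dagger}=\mathcal{A}^{\dagger}$ if and only if $(\mathcal{R}^{\dagger}*_N\mathcal{A}*_M\mathcal{T}^{\dagger})^{\dagger}=\mathcal{T}*_M\mathcal{A}^{\dagger}*_N\mathcal{R}$. In that case $\mathcal{A}_{\pi\dagger}=\mathcal{A}^{\dagger}=\mathcal{B}=\mathcal{C}$, where $\mathcal{B}=\mathcal{T}^{\dagger}*_L(\mathcal{A}*_M\mathcal{T}^{\dagger})^{\dagger}$ and $\mathcal{C}=(\mathcal{R}^{\dagger}*_N\mathcal{A})^{\dagger}*_K\mathcal{R}^{\dagger}$.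
   Context: $\mathbb{C}^{I_1\times\cdots\times I_N}$ denotes the set of complex tensors of order $N$ and dimension $I_1\times\cdots\times I_N$. For $\mathcal{A}\in\mathbb{C}^{I_1\times\cdots\times I_N\times K_1\times\cdots\times K_N}$ and $\mathcal{B}\in\mathbb{C}^{K_1\times\cdots\times K_N\times J_1\times\cdots\times J_M}$, the Einstein product $\mathcal{A}*_N\mathcal{B}$ is defined by $(\mathcal{A}*_N\mathcal{B})_{i_1\dots i_N j_1\dots j_M}=\sum_{k_1,\dots,k_N}a_{i_1\dots i_N k_1\dots k_N}b_{k_1\dots k_N j_1\dots j_M}$; it is associative. $\mathcal{A}^H$ denotes the conjugate transpose. For $\mathcal{A}\in\mathbb{C}^{I_1\times\cdots\times I_N\times J_1\times\cdots\times J_M}$ the Moore–Penrose inverse $\mathcal{A}^{\dagger}$ is the unique $\mathcal{X}\in\mathbb{C}^{J_1\times\cdots\times J_M\times I_1\times\cdots\times I_N}$ with $\mathcal{A}*_M\mathcal{X}*_N\mathcal{A}=\mathcal{A}$, $\mathcal{X}*_N\mathcal{A}*_M\mathcal{X}=\mathcal{X}$, $(\mathcal{A}*_M\mathcal{X})^H=\mathcal{A}*_M\mathcal{X}$, $(\mathcal{X}*_N\mathcal{A})^H=\mathcal{X}*_N\mathcal{A}$. Given the factorization $\mathcal{A}=\mathcal{R}*_K\mathcal{S}*_L\mathcal{T}$, the product Moore–Penrose inverse of $\mathcal{A}$ is $\mathcal{A}_{\pi\dagger}=\mathcal{T}^{\dagger}*_L(\mathcal{R}^{\dagger}*_N\mathcal{A}*_M\mathcal{T}^{\dagger})^{\dagger}*_K\mathcal{R}^{\dagger}$.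 *)

theory Defs
  imports Complex_Main
begin

definition idx :: "nat list \<Rightarrow> nat list set" where
  "idx ds = {is. length is = length ds \<and> (\<forall>k<length ds. is ! k < ds ! k)}"

text \<open>A tensor in C^{I_1 x ... x I_N x J_1 x ... x J_M} is represented as a function of
  the two multi-indices (row part, column part) that vanishes outside idx I x idx J.\<close>
type_synonym tensor = "nat list \<Rightarrow> nat list \<Rightarrow> complex"

definition tensors :: "nat list \<Rightarrow> nat list \<Rightarrow> tensor set" where
  "tensors I J = {A. \<forall>is js. A is js \<noteq> 0 \<longrightarrow> is \<in> idx I \<and> js \<in> idx J}"

definition ein :: "nat list \<Rightarrow> tensor \<Rightarrow> tensor \<Rightarrow> tensor" where
  "ein K A B = (\<lambda>is js. \<Sum>ks\<in>idx K. A is ks * B ks js)"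

definition ctr :: "tensor \<Rightarrow> tensor" where
  "ctr A = (\<lambda>js is. cnj (A is js))"

definition is_mpinv :: "nat list \<Rightarrow> nat list \<Rightarrow> tensor \<Rightarrow> tensor \<Rightarrow> bool" where
  "is_mpinv I J A X \<longleftrightarrow> X \<in> tensors J I \<and>
     ein I (ein J A X) A = A \<and> ein J (ein I X A) X = X \<and>
     ctr (ein J A X) = ein J A X \<and> ctr (ein I X A) = ein I X A"

definition mpinv :: "nat list \<Rightarrow> nat list \<Rightarrow> tensor \<Rightarrow> tensor" where
  "mpinv I J A = (THE X. is_mpinv I J A X)"

text \<open>Product Moore-Penrose inverse of A = R *_K S *_L T (R in C^{I x H}, S in C^{H x G},
  T in C^{G x J}):  T^+ *_L (R^+ *_N A *_M T^+)^+ *_K R^+.\<close>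
definition pmpinv :: "nat list \<Rightarrow> nat list \<Rightarrow> nat list \<Rightarrow> nat list \<Rightarrow>
    tensor \<Rightarrow> tensor \<Rightarrow> tensor \<Rightarrow> tensor" where
  "pmpinv I H G J R A T =
     ein H (ein G (mpinv G J T) (mpinv H G (ein J (ein I (mpinv I H R) A) (mpinv G J T))))
       (mpinv I H R)"

end

theory Submission
  imports Defs "HOL-Library.Function_Algebras"
begin


lemma finite_idx[simp]: "finite (idx K)"
proof -
  have "idx K \<subseteq> {xs. set xs \<subseteq> {..sum_list K} \<and> length xs = length K}"
  proof
    fix xs assume "xs \<in> idx K"
    then have l: "length xs = length K" and lt: "\<forall>k<length K. xs ! k < K ! k" by (auto simp: idx_def)
    have "set xs \<subseteq> {..sum_list K}"
    proof
      fix x assume "x \<in> set xs"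
      then obtain k where k: "k < length xs" "xs ! k = x" by (auto simp: in_set_conv_nth)
      then have "x < K ! k" using lt l by auto
      moreover have "K ! k \<le> sum_list K" using k l by (simp add: member_le_sum_list)
      ultimately show "x \<in> {..sum_list K}" by simp
    qed
    then show "xs \<in> {xs. set xs \<subseteq> {..sum_list K} \<and> length xs = length K}" using l by simp
  qed
  moreover have "finite {xs. set xs \<subseteq> {..sum_list K} \<and> length xs = length K}"
    by (rule finite_lists_length_eq) simp
  ultimately show ?thesis by (rule finite_subset)
qed

lemma ein_assoc: "ein K (ein L A B) C = ein L A (ein K B C)"
  unfolding ein_def
  by (rule ext, rule ext) (simp add: sum_distrib_left sum_distrib_right mult.assoc sum.swap[of _ "idx K"])

lemma ctr_ctr[simp]: "ctr (ctr A) = A"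
  by (simp add: ctr_def)

lemma ctr_ein: "ctr (ein K A B) = ein K (ctr B) (ctr A)"
  unfolding ctr_def ein_def by (rule ext, rule ext) (simp add: mult.commute)

lemma ctr_diff: "ctr (A - B) = ctr A - ctr B"
  unfolding ctr_def by (rule ext, rule ext) simp

lemma ein_diff_right: "ein K A (B - C) = ein K A B - ein K A C"
  unfolding ein_def by (rule ext, rule ext) (simp add: right_diff_distrib sum_subtractf)

lemma ein_zero_right[simp]: "ein K A 0 = 0"
  unfolding ein_def by (rule ext, rule ext) simp

definition idt :: "nat list \<Rightarrow> tensor" where
  "idt K = (\<lambda>i j. if i = j \<and> i \<in> idx K then 1 else 0)"

lemma tensorsD: "A \<in> tensors I J \<Longrightarrow> A i j \<noteq> 0 \<Longrightarrow> i \<in> idx I \<and> j \<in> idx J"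
  by (auto simp: tensors_def)

lemma ein_idt_right: "A \<in> tensors I J \<Longrightarrow> ein J A (idt J) = A"
  unfolding ein_def idt_def
proof (rule ext, rule ext)
  fix i j assume A: "A \<in> tensors I J"
  have "(\<Sum>ks\<in>idx J. A i ks * (if ks = j \<and> ks \<in> idx J then 1 else 0)) = (\<Sum>ks\<in>idx J. if ks = j then A i ks else 0)"
    by (rule sum.cong) auto
  also have "\<dots> = A i j" using tensorsD[OF A, of i j] by (auto simp: sum.delta)
  finally show "(\<Sum>ks\<in>idx J. A i ks * (if ks = j \<and> ks \<in> idx J then 1 else 0)) = A i j" .
qed

lemma ein_idt_left: "A \<in> tensors I J \<Longrightarrow> ein I (idt I) A = A"
  unfolding ein_def idt_def
proof (rule ext, rule ext)
  fix i j assume A: "A \<in> tensors I J"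
  have "(\<Sum>ks\<in>idx I. (if i = ks \<and> i \<in> idx I then 1 else 0) * A ks j) = (\<Sum>ks\<in>idx I. if i = ks then A ks j else 0)"
    by (rule sum.cong) auto
  also have "\<dots> = A i j" using tensorsD[OF A, of i j] by (auto simp: sum.delta)
  finally show "(\<Sum>ks\<in>idx I. (if i = ks \<and> i \<in> idx I then 1 else 0) * A ks j) = A i j" .
qed

lemma idt_tensors: "idt K \<in> tensors K K"
  by (auto simp: idt_def tensors_def)

lemma ein_tensors: "A \<in> tensors I K \<Longrightarrow> B \<in> tensors K J \<Longrightarrow> ein K A B \<in> tensors I J"
proof -
  assume A: "A \<in> tensors I K" and B: "B \<in> tensors K J"
  show ?thesis unfolding tensors_def
  proof (intro CollectI allI impI)
    fix ii jj assume "ein K A B ii jj \<noteq> 0"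
    then obtain k where "A ii k * B k jj \<noteq> 0" unfolding ein_def by (meson sum.neutral)
    then show "ii \<in> idx I \<and> jj \<in> idx J" using tensorsD[OF A] tensorsD[OF B] by auto
  qed
qed

lemma ctr_tensors: "A \<in> tensors I J \<Longrightarrow> ctr A \<in> tensors J I"
  unfolding tensors_def ctr_def by auto

lemma gram_zero:
  assumes X: "\<And>i k. i \<notin> idx I \<Longrightarrow> X i k = 0" and Z: "ein I (ctr X) X = 0"
  shows "X = 0"
proof (rule ext, rule ext)
  fix i k
  have "ein I (ctr X) X k k = 0" using Z by simp
  then have "(\<Sum>i\<in>idx I. cnj (X i k) * X i k) = 0" by (simp add: ein_def ctr_def)
  moreover have "\<And>i. cnj (X i k) * X i k = complex_of_real ((cmod (X i k))\<^sup>2)"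
    by (metis complex_norm_square mult.commute of_real_power)
  ultimately have "(\<Sum>i\<in>idx I. complex_of_real ((cmod (X i k))\<^sup>2)) = 0"
    by simp
  then have "(\<Sum>i\<in>idx I. (cmod (X i k))\<^sup>2) = 0"
    by (metis of_real_0 of_real_eq_iff of_real_sum)
  then have "\<forall>i\<in>idx I. (cmod (X i k))\<^sup>2 = 0"
    by (subst (asm) sum_nonneg_eq_0_iff) auto
  then show "X i k = 0 i k" using X[of i k] by (cases "i \<in> idx I") auto
qed

lemma cancel_gram:
  assumes A: "A \<in> tensors I J"
    and eq: "ein J (ein I (ctr A) A) P = ein J (ein I (ctr A) A) P'"
  shows "ein J A P = ein J A P'"
proof -
  let ?D = "ein J A (P - P')"
  have D: "\<And>i k. i \<notin> idx I \<Longrightarrow> ?D i k = 0"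
  proof -
    fix i k assume "i \<notin> idx I"
    then have "\<forall>ks. A i ks = 0" using A by (auto simp: tensors_def)
    then show "?D i k = 0" by (simp add: ein_def)
  qed
  have "ein I (ctr ?D) ?D = ein J (ctr (P - P')) (ein I (ctr A) (ein J A (P - P')))"
    by (simp add: ctr_ein ein_assoc)
  also have "ein I (ctr A) (ein J A (P - P')) = 0"
    using eq by (simp add: ein_assoc[symmetric] ein_diff_right)
  finally have "ein I (ctr ?D) ?D = 0" by (simp only: ein_zero_right)
  then have "?D = 0" using gram_zero[of I ?D] D by blast
  then show ?thesis by (simp add: ein_diff_right)
qed


lemma mp_unique:
  assumes X: "is_mpinv I J A X" and Y: "is_mpinv I J A Y"
  shows "X = Y"
proof -
  from X have x1: "ein I (ein J A X) A = A" and x2: "ein J (ein I X A) X = X"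
    and x3: "ctr (ein J A X) = ein J A X" and x4: "ctr (ein I X A) = ein I X A"
    by (auto simp: is_mpinv_def)
  from Y have y1: "ein I (ein J A Y) A = A" and y2: "ein J (ein I Y A) Y = Y"
    and y3: "ctr (ein J A Y) = ein J A Y" and y4: "ctr (ein I Y A) = ein I Y A"
    by (auto simp: is_mpinv_def)
  have "ctr A = ctr (ein I (ein J A Y) A)" using y1 by simp
  also have "\<dots> = ein I (ctr A) (ctr (ein J A Y))" by (rule ctr_ein)
  finally have cA: "ctr A = ein I (ctr A) (ein J A Y)" by (simp only: y3)
  have "ctr A = ctr (ein J A (ein I X A))" using x1 by (simp add: ein_assoc)
  also have "\<dots> = ein J (ctr (ein I X A)) (ctr A)" by (rule ctr_ein)
  finally have cA': "ctr A = ein J (ein I X A) (ctr A)" by (simp only: x4)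
  have "X = ein I X (ein J A X)" using x2 by (simp add: ein_assoc)
  also have "\<dots> = ein I X (ctr (ein J A X))" using x3 by simp
  also have "\<dots> = ein I X (ein J (ctr X) (ctr A))" by (simp add: ctr_ein)
  also have "\<dots> = ein I X (ein J (ctr X) (ein I (ctr A) (ein J A Y)))" using cA by simp
  also have "\<dots> = ein I X (ein I (ctr (ein J A X)) (ein J A Y))" by (simp add: ctr_ein ein_assoc)
  also have "\<dots> = ein I (ein J (ein I X A) X) (ein J A Y)" using x3 by (simp add: ein_assoc)
  also have "\<dots> = ein I X (ein J A Y)" using x2 by simp
  finally have xe: "X = ein I X (ein J A Y)" .
  have "Y = ein J (ein I Y A) Y" using y2 by simp
  also have "\<dots> = ein J (ctr (ein I Y A)) Y" using y4 by simp
  also have "\<dots> = ein J (ein I (ctr A) (ctr Y)) Y" by (simp add: ctr_ein)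
  also have "\<dots> = ein J (ein I (ein J (ein I X A) (ctr A)) (ctr Y)) Y" using cA' by simp
  also have "\<dots> = ein J (ein I X A) (ein J (ctr (ein I Y A)) Y)" by (simp add: ctr_ein ein_assoc)
  also have "\<dots> = ein I X (ein J A (ein J (ein I Y A) Y))" using y4 by (simp add: ein_assoc)
  also have "\<dots> = ein I X (ein J A Y)" using y2 by simp
  finally show ?thesis using xe by simp
qed

lemma mp_13_14:
  assumes Y: "Y \<in> tensors J I" "ein I (ein J A Y) A = A" "ctr (ein I Y A) = ein I Y A"
    and Z: "Z \<in> tensors J I" "ein I (ein J A Z) A = A" "ctr (ein J A Z) = ein J A Z"
    and A: "A \<in> tensors I J"
  shows "is_mpinv I J A (ein J (ein I Y A) Z)"
proof -
  have z2: "ein J A (ein I Z A) = A" using Z by (simp add: ein_assoc)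
  have y2: "ein J A (ein I Y A) = A" using Y by (simp add: ein_assoc)
  have z2t: "\<And>W. ein J A (ein I Z (ein J A W)) = ein J A W"
    using Z by (simp add: ein_assoc[symmetric])
  have y2t: "\<And>W. ein J A (ein I Y (ein J A W)) = ein J A W"
    using Y by (simp add: ein_assoc[symmetric])
  show ?thesis
  unfolding is_mpinv_def
  proof (intro conjI)
    show "ein J (ein I Y A) Z \<in> tensors J I"
      by (intro ein_tensors Y Z A)
  qed (simp_all add: ein_assoc z2 y2 z2t y2t Y Z)
qed


definition sc :: "complex \<Rightarrow> tensor \<Rightarrow> tensor" where
  "sc c X = (\<lambda>i j. c * X i j)"

interpretation tv: vector_space sc
  by unfold_locales (auto simp: sc_def fun_eq_iff algebra_simps)

lemma sum_tapply: "(\<Sum>x\<in>S. f x) i j = (\<Sum>x\<in>S. (f x :: tensor) i j)"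
proof (cases "finite S")
  case True then show ?thesis by (induction S rule: finite_induct) auto
qed simp

lemma ein_sc_right: "ein K P (sc c X) = sc c (ein K P X)"
  unfolding ein_def sc_def by (rule ext, rule ext) (simp add: sum_distrib_left algebra_simps)

lemma ein_sc_left: "ein K (sc c X) P = sc c (ein K X P)"
  unfolding ein_def sc_def by (rule ext, rule ext) (simp add: sum_distrib_left algebra_simps)

lemma ein_sum_right: "ein K P (\<Sum>x\<in>S. f x) = (\<Sum>x\<in>S. ein K P (f x))"
  unfolding ein_def by (rule ext, rule ext) (simp add: sum_tapply sum_distrib_left sum.swap[of _ S])

lemma ein_sum_left: "ein K (\<Sum>x\<in>S. f x) P = (\<Sum>x\<in>S. ein K (f x) P)"
  unfolding ein_def by (rule ext, rule ext) (simp add: sum_tapply sum_distrib_right sum.swap[of _ S])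

lemma sc_tensors: "X \<in> tensors I J \<Longrightarrow> sc c X \<in> tensors I J"
  by (auto simp: tensors_def sc_def)

lemma sum_tensors: "(\<And>x. x \<in> S \<Longrightarrow> f x \<in> tensors I J) \<Longrightarrow> (\<Sum>x\<in>S. f x) \<in> tensors I J"
  unfolding tensors_def
proof (intro CollectI allI impI)
  fix ii jj assume H: "\<And>x. x \<in> S \<Longrightarrow> f x \<in> {A. \<forall>is js. A is js \<noteq> 0 \<longrightarrow> is \<in> idx I \<and> js \<in> idx J}"
    and "sum f S ii jj \<noteq> 0"
  then obtain x where "x \<in> S" "f x ii jj \<noteq> 0" unfolding sum_tapply by (meson sum.neutral)
  then show "ii \<in> idx I \<and> jj \<in> idx J" using H by blast
qed

primrec pw :: "nat list \<Rightarrow> tensor \<Rightarrow> nat \<Rightarrow> tensor" where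
  "pw J B 0 = idt J"
| "pw J B (Suc n) = ein J B (pw J B n)"

lemma pw_tensors: "B \<in> tensors J J \<Longrightarrow> pw J B n \<in> tensors J J"
  by (induction n) (auto intro: ein_tensors idt_tensors)

lemma pw_add: "B \<in> tensors J J \<Longrightarrow> pw J B (a + b) = ein J (pw J B a) (pw J B b)"
  by (induction a) (auto simp: ein_idt_left[OF pw_tensors] ein_assoc)

lemma pw_one: "B \<in> tensors J J \<Longrightarrow> pw J B (Suc 0) = B"
  by (simp add: ein_idt_right)

definition unit :: "nat list \<Rightarrow> nat list \<Rightarrow> tensor" where
  "unit a b = (\<lambda>i j. if i = a \<and> j = b then 1 else 0)"

lemma in_span_units:
  assumes X: "X \<in> tensors J J"
  shows "X \<in> tv.span ((\<lambda>p. unit (fst p) (snd p)) ` (idx J \<times> idx J))"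
proof -
  have "X = (\<Sum>p\<in>idx J \<times> idx J. sc (X (fst p) (snd p)) (unit (fst p) (snd p)))"
  proof (rule ext, rule ext)
    fix i j
    have "(\<Sum>p\<in>idx J \<times> idx J. sc (X (fst p) (snd p)) (unit (fst p) (snd p))) i j
        = (\<Sum>p\<in>idx J \<times> idx J. if p = (i, j) then X i j else 0)"
      unfolding sum_tapply by (rule sum.cong) (auto simp: sc_def unit_def)
    also have "\<dots> = X i j" using tensorsD[OF X, of i j] by (auto simp: sum.delta)
    finally show "X i j = (\<Sum>p\<in>idx J \<times> idx J. sc (X (fst p) (snd p)) (unit (fst p) (snd p))) i j" by simp
  qed
  also have "\<dots> \<in> tv.span ((\<lambda>p. unit (fst p) (snd p)) ` (idx J \<times> idx J))"
    by (intro tv.span_sum tv.span_scale tv.span_base) auto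
  finally show ?thesis .
qed

lemma pw_rel:
  assumes B: "B \<in> tensors J J"
  shows "\<exists>m c. (\<Sum>i\<in>{1..m}. sc (c i) (pw J B i)) = 0 \<and> (\<exists>i\<in>{1..m}. c i \<noteq> 0)"
proof -
  define E where "E = (\<lambda>p. unit (fst p) (snd p)) ` (idx J \<times> idx J)"
  have finE: "finite E" unfolding E_def by simp
  define N where "N = card E"
  show ?thesis
  proof (cases "inj_on (pw J B) {1..N+1}")
    case True
    define F where "F = pw J B ` {1..N+1}"
    have cF: "card F = N + 1" unfolding F_def using card_image[OF True] by simp
    have "tv.dependent F"
    proof (rule ccontr)
      assume "\<not> tv.dependent F"
      moreover have "F \<subseteq> tv.span E" unfolding F_def E_def using in_span_units pw_tensors[OF B] by blast
      ultimately have "card F \<le> card E" using tv.independent_span_bound[OF finE] by blast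
      then show False using cF N_def by simp
    qed
    then obtain T u where T: "finite T" "T \<subseteq> F" "(\<Sum>v\<in>T. sc (u v) v) = 0" "\<exists>v\<in>T. u v \<noteq> 0"
      unfolding tv.dependent_explicit by blast
    define c where "c i = (if pw J B i \<in> T then u (pw J B i) else 0)" for i
    have "(\<Sum>i\<in>{1..N+1}. sc (c i) (pw J B i)) = (\<Sum>v\<in>F. sc (if v \<in> T then u v else 0) v)"
      unfolding F_def c_def by (subst sum.reindex[OF True]) simp
    also have "\<dots> = (\<Sum>v\<in>F. if v \<in> T then sc (u v) v else 0)"
      by (rule sum.cong) auto
    also have "\<dots> = (\<Sum>v\<in>F \<inter> T. sc (u v) v)"
      by (rule sum.inter_restrict[symmetric]) (simp add: F_def)
    also have "F \<inter> T = T" using T by blast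
    finally have "(\<Sum>i\<in>{1..N+1}. sc (c i) (pw J B i)) = 0" by (simp only: T(3))
    moreover have "\<exists>i\<in>{1..N+1}. c i \<noteq> 0"
      using T unfolding c_def F_def by auto
    ultimately show ?thesis by blast
  next
    case False
    then obtain a b where ab: "a \<in> {1..N+1}" "b \<in> {1..N+1}" "a \<noteq> b" "pw J B a = pw J B b"
      unfolding inj_on_def by blast
    define c where "c i = (if i = a then 1 else if i = b then -1 else (0::complex))" for i
    have "(\<Sum>i\<in>{1..N+1}. sc (c i) (pw J B i))
        = (\<Sum>i\<in>{1..N+1}. (if i = a then pw J B a else 0) - (if i = b then pw J B b else 0))"
      by (rule sum.cong) (auto simp: c_def sc_def ab(3) fun_eq_iff)
    also have "\<dots> = 0" using ab by (simp add: sum_subtractf sum.delta)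
    finally show ?thesis using ab(1) by (intro exI[of _ "N+1"] exI[of _ c]) (auto simp: c_def)
  qed
qed


lemma pw_comm: "B \<in> tensors J J \<Longrightarrow> ein J B (pw J B n) = ein J (pw J B n) B"
  using pw_add[of B J n "Suc 0"] by (simp add: ein_idt_right)

lemma pw_step_down:
  assumes B: "B \<in> tensors J J" and h: "ctr B = B"
    and eq: "pw J B (Suc (Suc n)) = ein J (pw J B (Suc (Suc (Suc n)))) Q"
  shows "pw J B (Suc n) = ein J (pw J B (Suc (Suc n))) Q"
proof -
  have "ein J (ein J (ctr B) B) (pw J B n) = pw J B (Suc (Suc n))"
    by (simp only: h pw.simps ein_assoc)
  also have "\<dots> = ein J (pw J B (Suc (Suc (Suc n)))) Q" by (rule eq)
  also have "\<dots> = ein J (ein J (ctr B) B) (ein J (pw J B (Suc n)) Q)"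
    by (simp only: h pw.simps(2)[of J B "Suc (Suc n)"] pw.simps(2)[of J B "Suc n"] ein_assoc)
  finally have "ein J (ein J (ctr B) B) (pw J B n) = ein J (ein J (ctr B) B) (ein J (pw J B (Suc n)) Q)" .
  then have c: "ein J B (pw J B n) = ein J B (ein J (pw J B (Suc n)) Q)"
    by (rule cancel_gram[OF B])
  have "pw J B (Suc n) = ein J B (pw J B n)" by simp
  also have "\<dots> = ein J B (ein J (pw J B (Suc n)) Q)" by (rule c)
  also have "\<dots> = ein J (pw J B (Suc (Suc n))) Q" by (simp only: pw.simps(2)[of J B "Suc n"] ein_assoc)
  finally show ?thesis .
qed

lemma herm_inner:
  assumes B: "B \<in> tensors J J" and h: "ctr B = B"
  shows "\<exists>Q \<in> tensors J J. ein J (ein J B Q) B = B"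
proof -
  obtain m c where rel: "(\<Sum>i\<in>{1..m}. sc (c i) (pw J B i)) = 0" and nz: "\<exists>i\<in>{1..m}. c i \<noteq> 0"
    using pw_rel[OF B] by blast
  define k where "k = (LEAST i. i \<in> {1..m} \<and> c i \<noteq> 0)"
  have k: "k \<in> {1..m}" "c k \<noteq> 0" using LeastI_ex[OF nz[unfolded Bex_def]] unfolding k_def by auto
  have below: "c i = 0" if "i \<in> {1..m}" "i < k" for i
    using not_less_Least[of i "\<lambda>i. i \<in> {1..m} \<and> c i \<noteq> 0"] that unfolding k_def by blast
  define R where "R = (\<Sum>i\<in>{Suc k..m}. sc (c i) (pw J B i))"
  have "(\<Sum>i\<in>{1..m}. sc (c i) (pw J B i)) = (\<Sum>i\<in>{k..m}. sc (c i) (pw J B i))"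
    by (rule sum.mono_neutral_right) (use k below in \<open>auto simp: sc_def fun_eq_iff\<close>)
  also have "\<dots> = sc (c k) (pw J B k) + R"
    unfolding R_def using k by (subst sum.atLeast_Suc_atMost) auto
  finally have R: "R = - sc (c k) (pw J B k)" using rel by (simp add: eq_neg_iff_add_eq_0 add.commute)
  define Q where "Q = (\<Sum>i\<in>{Suc k..m}. sc (- c i / c k) (pw J B (i - Suc k)))"
  have Qt: "Q \<in> tensors J J" unfolding Q_def
    by (intro sum_tensors sc_tensors pw_tensors B)
  have "ein J (pw J B (Suc k)) Q = (\<Sum>i\<in>{Suc k..m}. sc (- c i / c k) (ein J (pw J B (Suc k)) (pw J B (i - Suc k))))"
    unfolding Q_def by (simp only: ein_sum_right ein_sc_right)
  also have "\<dots> = (\<Sum>i\<in>{Suc k..m}. sc (- 1 / c k) (sc (c i) (pw J B i)))"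
  proof (rule sum.cong[OF refl])
    fix i assume i: "i \<in> {Suc k..m}"
    have "ein J (pw J B (Suc k)) (pw J B (i - Suc k)) = pw J B i"
      using i by (simp only: pw_add[OF B, symmetric]) simp
    then show "sc (- c i / c k) (ein J (pw J B (Suc k)) (pw J B (i - Suc k))) = sc (- 1 / c k) (sc (c i) (pw J B i))"
      by simp
  qed
  also have "\<dots> = sc (- 1 / c k) R" unfolding R_def by (simp add: tv.scale_sum_right)
  also have "\<dots> = pw J B k" using k(2) by (simp add: R)
  finally have kQ: "pw J B k = ein J (pw J B (Suc k)) Q" by simp
  have comm: "ein J B Q = ein J Q B"
    unfolding Q_def by (simp only: ein_sum_right ein_sum_left ein_sc_right ein_sc_left pw_comm[OF B])
  have down: "pw J B (Suc d) = ein J (pw J B (Suc (Suc d))) Q \<Longrightarrow> pw J B (Suc 0) = ein J (pw J B (Suc (Suc 0))) Q" for d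
  proof (induction d)
    case (Suc d)
    then show ?case using pw_step_down[OF B h] by blast
  qed simp
  obtain d where "k = Suc d" using k by (cases k) auto
  then have "pw J B (Suc 0) = ein J (pw J B (Suc (Suc 0))) Q" using down kQ by simp
  then have "B = ein J B (ein J B Q)" by (simp add: pw_one[OF B] ein_idt_right[OF B] ein_assoc)
  then have "ein J (ein J B Q) B = B" by (simp add: ein_assoc comm[symmetric])
  then show ?thesis using Qt by blast
qed

lemma mp13:
  assumes A: "A \<in> tensors I J"
  shows "\<exists>Z. Z \<in> tensors J I \<and> ein I (ein J A Z) A = A \<and> ctr (ein J A Z) = ein J A Z"
proof -
  define B where "B = ein I (ctr A) A"
  have Bt: "B \<in> tensors J J" unfolding B_def by (intro ein_tensors ctr_tensors A)
  have Bh: "ctr B = B" unfolding B_def by (simp add: ctr_ein)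
  obtain Q where Qt: "Q \<in> tensors J J" and BQB: "ein J (ein J B Q) B = B"
    using herm_inner[OF Bt Bh] by blast
  have "ein J (ein I (ctr A) A) (ein J Q B) = ein J (ein I (ctr A) A) (idt J)"
    using BQB by (simp add: B_def[symmetric] ein_idt_right[OF Bt] ein_assoc)
  then have AQB: "ein J A (ein J Q B) = A"
    using cancel_gram[OF A] ein_idt_right[OF A] by metis
  have "ctr A = ctr (ein J A (ein J Q B))" using AQB by simp
  also have "\<dots> = ein J B (ein J (ctr Q) (ctr A))" by (simp add: ctr_ein Bh ein_assoc)
  finally have cA: "ctr A = ein J B (ein J (ctr Q) (ctr A))" .
  define Z where "Z = ein J Q (ctr A)"
  have Zt: "Z \<in> tensors J I" unfolding Z_def by (intro ein_tensors ctr_tensors A Qt)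
  have 1: "ein I (ein J A Z) A = A" unfolding Z_def using AQB by (simp add: ein_assoc B_def)
  have "ein J A Z = ein J A (ein J Q (ein J B (ein J (ctr Q) (ctr A))))"
    unfolding Z_def using cA by (metis)
  also have "\<dots> = ein J (ein J A (ein J Q B)) (ein J (ctr Q) (ctr A))" by (simp add: ein_assoc)
  also have "\<dots> = ein J A (ein J (ctr Q) (ctr A))" using AQB by simp
  also have "\<dots> = ctr (ein J A Z)" unfolding Z_def by (simp add: ctr_ein ein_assoc)
  finally have 2: "ctr (ein J A Z) = ein J A Z" by simp
  show ?thesis using Zt 1 2 by blast
qed

lemma mp_exists:
  assumes A: "A \<in> tensors I J"
  shows "\<exists>X. is_mpinv I J A X"
proof -
  obtain Z where Z: "Z \<in> tensors J I" "ein I (ein J A Z) A = A" "ctr (ein J A Z) = ein J A Z"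
    using mp13[OF A] by blast
  obtain Z' where Z': "Z' \<in> tensors I J" "ein J (ein I (ctr A) Z') (ctr A) = ctr A"
      "ctr (ein I (ctr A) Z') = ein I (ctr A) Z'"
    using mp13[OF ctr_tensors[OF A]] by blast
  define Y where "Y = ctr Z'"
  have Yt: "Y \<in> tensors J I" unfolding Y_def by (rule ctr_tensors[OF Z'(1)])
  have "ctr (ein I (ein J A Y) A) = ein I (ctr A) (ein J Z' (ctr A))"
    unfolding Y_def by (simp add: ctr_ein)
  also have "\<dots> = ctr A" using Z'(2) by (simp add: ein_assoc)
  finally have Y2: "ein I (ein J A Y) A = A" by (metis ctr_ctr)
  have Y3: "ctr (ein I Y A) = ein I Y A"
    unfolding Y_def using Z'(3) by (metis ctr_ctr ctr_ein)
  show ?thesis using mp_13_14[OF Yt Y2 Y3 Z A] by blast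
qed

lemma mpinv_is: "A \<in> tensors I J \<Longrightarrow> is_mpinv I J A (mpinv I J A)"
  unfolding mpinv_def using mp_exists mp_unique by (metis theI)

lemma mpinv_eq: "is_mpinv I J A X \<Longrightarrow> mpinv I J A = X"
  unfolding mpinv_def using mp_unique by blast


lemma left_absorb:
  assumes X: "is_mpinv I J A X" and AP: "ein J A P = A" and P: "ctr P = P"
  shows "ein J P X = X"
proof -
  from X have x2: "ein J (ein I X A) X = X" and x4: "ctr (ein I X A) = ein I X A"
    by (auto simp: is_mpinv_def)
  have e: "X = ein J (ein I (ctr A) (ctr X)) X"
    using x2 x4 by (metis ctr_ein)
  have cA: "ein J P (ctr A) = ctr A"
    using AP P by (metis ctr_ein)
  have "ein J P X = ein J P (ein J (ein I (ctr A) (ctr X)) X)" using e by metis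
  also have "\<dots> = ein J (ein I (ein J P (ctr A)) (ctr X)) X" by (simp only: ein_assoc)
  also have "\<dots> = X" using cA e by simp
  finally show ?thesis .
qed

lemma right_absorb:
  assumes X: "is_mpinv I J A X" and PA: "ein I P A = A" and P: "ctr P = P"
  shows "ein I X P = X"
proof -
  from X have x2: "ein J (ein I X A) X = X" and x3: "ctr (ein J A X) = ein J A X"
    by (auto simp: is_mpinv_def)
  have e: "X = ein I X (ein J (ctr X) (ctr A))"
    using x2 x3 by (metis ctr_ein ein_assoc)
  have cA: "ein I (ctr A) P = ctr A"
    using PA P by (metis ctr_ein)
  have "ein I X P = ein I (ein I X (ein J (ctr X) (ctr A))) P" using e by metis
  also have "\<dots> = ein I X (ein J (ctr X) (ein I (ctr A) P))" by (simp only: ein_assoc)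
  also have "\<dots> = X" using cA e by simp
  finally show ?thesis .
qed


theorem theorem3p9:
  fixes I H G J :: "nat list" and R S T :: tensor
  assumes "R \<in> tensors I H" and "S \<in> tensors H G" and "T \<in> tensors G J"
  defines "A \<equiv> ein G (ein H R S) T"
  defines "B \<equiv> ein G (mpinv G J T) (mpinv I G (ein J A (mpinv G J T)))"
  defines "C \<equiv> ein H (mpinv H J (ein I (mpinv I H R) A)) (mpinv I H R)"
  shows "(pmpinv I H G J R A T = mpinv I J A \<longleftrightarrow>
           mpinv H G (ein J (ein I (mpinv I H R) A) (mpinv G J T))
             = ein I (ein J T (mpinv I J A)) R)
       \<and> (pmpinv I H G J R A T = mpinv I J A \<longrightarrow>
           mpinv I J A = B \<and> B = C)"
proof -
  note Rt = assms(1) and St = assms(2) and Tt = assms(3)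
  have At: "A \<in> tensors I J" unfolding A_def by (intro ein_tensors Rt St Tt)
  define Rp where "Rp = mpinv I H R"
  define Tp where "Tp = mpinv G J T"
  define Ap where "Ap = mpinv I J A"
  define M where "M = ein J (ein I Rp A) Tp"
  define Mp where "Mp = mpinv H G M"
  have mR: "is_mpinv I H R Rp" unfolding Rp_def by (rule mpinv_is[OF Rt])
  have mT: "is_mpinv G J T Tp" unfolding Tp_def by (rule mpinv_is[OF Tt])
  have mA: "is_mpinv I J A Ap" unfolding Ap_def by (rule mpinv_is[OF At])
  have Rpt: "Rp \<in> tensors H I" and Tpt: "Tp \<in> tensors J G" and Apt: "Ap \<in> tensors J I"
    using mR mT mA by (auto simp: is_mpinv_def)
  have Mt: "M \<in> tensors H G" unfolding M_def by (intro ein_tensors Rpt At Tpt)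
  have mM: "is_mpinv H G M Mp" unfolding Mp_def by (rule mpinv_is[OF Mt])
  from mR have r1: "ein I (ein H R Rp) R = R" and r2: "ein H (ein I Rp R) Rp = Rp"
    and r3: "ctr (ein H R Rp) = ein H R Rp" and r4: "ctr (ein I Rp R) = ein I Rp R"
    by (auto simp: is_mpinv_def)
  from mT have t1: "ein G (ein J T Tp) T = T" and t2: "ein J (ein G Tp T) Tp = Tp"
    and t3: "ctr (ein J T Tp) = ein J T Tp" and t4: "ctr (ein G Tp T) = ein G Tp T"
    by (auto simp: is_mpinv_def)
  from mA have a1: "ein I (ein J A Ap) A = A" and a2: "ein J (ein I Ap A) Ap = Ap"
    and a3: "ctr (ein J A Ap) = ein J A Ap" and a4: "ctr (ein I Ap A) = ein I Ap A"
    by (auto simp: is_mpinv_def)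
  from mM have m3: "ctr (ein G M Mp) = ein G M Mp" and m4: "ctr (ein H Mp M) = ein H Mp M"
    by (auto simp: is_mpinv_def)
  have a1r: "ein J A (ein I Ap A) = A" using a1 by (simp add: ein_assoc)
  have a1t: "ein J A (ein I Ap (ein J A W)) = ein J A W" for W
    using arg_cong[OF a1, of "\<lambda>X. ein J X W"] by (simp add: ein_assoc)
  have a2r: "ein I Ap (ein J A Ap) = Ap" using a2 by (simp add: ein_assoc)
  have a2t: "ein I Ap (ein J A (ein I Ap W)) = ein I Ap W" for W
    using arg_cong[OF a2, of "\<lambda>X. ein I X W"] by (simp add: ein_assoc)
  have F1: "ein H R (ein I Rp A) = A"
  proof -
    have "ein H R (ein I Rp A) = ein G (ein H (ein I (ein H R Rp) R) S) T"
      unfolding A_def by (simp add: ein_assoc)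
    then show ?thesis using r1 A_def by simp
  qed
  have F2: "ein J A (ein G Tp T) = A"
  proof -
    have "ein J A (ein G Tp T) = ein G (ein H R S) (ein G (ein J T Tp) T)"
      unfolding A_def by (simp add: ein_assoc)
    then show ?thesis using t1 A_def by simp
  qed
  have F3: "ein I Ap (ein H R Rp) = Ap"
    using right_absorb[OF mA, of "ein H R Rp"] F1 r3 by (simp add: ein_assoc)
  have F3t: "ein I Ap (ein H R (ein I Rp W)) = ein I Ap W" for W
    using arg_cong[OF F3, of "\<lambda>X. ein I X W"] by (simp add: ein_assoc)
  have F4: "ein G Tp (ein J T Ap) = Ap"
    using left_absorb[OF mA, of "ein G Tp T"] F2 t4 by (simp add: ein_assoc)
  have F4t: "ein G Tp (ein J T (ein I Ap W)) = ein I Ap W" for W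
    using arg_cong[OF F4, of "\<lambda>X. ein I X W"] by (simp add: ein_assoc)
  have TMp: "ein G (ein J T Tp) Mp = Mp"
  proof (rule left_absorb[OF mM])
    show "ctr (ein J T Tp) = ein J T Tp" by (rule t3)
    have "ein G Tp (ein J T Tp) = Tp" using t2 by (simp add: ein_assoc)
    then show "ein G M (ein J T Tp) = M" unfolding M_def by (simp add: ein_assoc)
  qed
  have TMpt: "ein J T (ein G Tp (ein H Mp W)) = ein H Mp W" for W
    using arg_cong[OF TMp, of "\<lambda>X. ein H X W"] by (simp add: ein_assoc)
  have MpR: "ein H Mp (ein I Rp R) = Mp"
  proof (rule right_absorb[OF mM])
    show "ctr (ein I Rp R) = ein I Rp R" by (rule r4)
    have "ein I Rp (ein H R (ein I Rp W)) = ein I Rp W" for W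
      using arg_cong[OF r2, of "\<lambda>X. ein I X W"] by (simp add: ein_assoc)
    then show "ein H (ein I Rp R) M = M" unfolding M_def by (simp add: ein_assoc)
  qed
  have pm: "pmpinv I H G J R A T = ein H (ein G Tp Mp) Rp"
    unfolding pmpinv_def Mp_def M_def Rp_def Tp_def ..
  have iff: "ein H (ein G Tp Mp) Rp = Ap \<longleftrightarrow> Mp = ein I (ein J T Ap) R"
  proof
    assume h: "ein H (ein G Tp Mp) Rp = Ap"
    have "ein I (ein J T Ap) R = ein I (ein J T (ein H (ein G Tp Mp) Rp)) R" using h by simp
    also have "\<dots> = ein J T (ein G Tp (ein H Mp (ein I Rp R)))" by (simp only: ein_assoc)
    also have "\<dots> = ein H Mp (ein I Rp R)" by (rule TMpt)
    also have "\<dots> = Mp" by (rule MpR)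
    finally show "Mp = ein I (ein J T Ap) R" by simp
  next
    assume h: "Mp = ein I (ein J T Ap) R"
    have "ein H (ein G Tp Mp) Rp = ein G Tp (ein J T (ein I Ap (ein H R Rp)))"
      unfolding h by (simp only: ein_assoc)
    also have "\<dots> = Ap" by (simp add: F3 F4)
    finally show "ein H (ein G Tp Mp) Rp = Ap" .
  qed
  have part2: "Ap = B \<and> B = C" if h: "Mp = ein I (ein J T Ap) R"
  proof -
    have hr: "Mp = ein J T (ein I Ap R)" using h by (simp add: ein_assoc)
    have isB: "is_mpinv I G (ein J A Tp) (ein J T Ap)"
      unfolding is_mpinv_def
    proof (intro conjI)
      show "ein J T Ap \<in> tensors G I" by (intro ein_tensors Tt Apt)
      show "ein I (ein G (ein J A Tp) (ein J T Ap)) (ein J A Tp) = ein J A Tp"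
        by (simp add: ein_assoc F4t a1t)
      show "ein G (ein I (ein J T Ap) (ein J A Tp)) (ein J T Ap) = ein J T Ap"
        by (simp add: ein_assoc F4 a2r)
      show "ctr (ein G (ein J A Tp) (ein J T Ap)) = ein G (ein J A Tp) (ein J T Ap)"
        by (simp add: ein_assoc F4 a3)
      have "ein I (ein J T Ap) (ein J A Tp) = ein H Mp M"
        unfolding hr M_def by (simp add: ein_assoc F3t)
      then show "ctr (ein I (ein J T Ap) (ein J A Tp)) = ein I (ein J T Ap) (ein J A Tp)"
        using m4 by simp
    qed
    have isC: "is_mpinv H J (ein I Rp A) (ein I Ap R)"
      unfolding is_mpinv_def
    proof (intro conjI)
      show "ein I Ap R \<in> tensors J H" by (intro ein_tensors Rt Apt)
      show "ein H (ein J (ein I Rp A) (ein I Ap R)) (ein I Rp A) = ein I Rp A"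
        by (simp add: ein_assoc F3t a1r F1)
      show "ein J (ein H (ein I Ap R) (ein I Rp A)) (ein I Ap R) = ein I Ap R"
        by (simp add: ein_assoc F3t a2t F1)
      have "ein J (ein I Rp A) (ein I Ap R) = ein G M Mp"
        unfolding hr M_def by (simp add: ein_assoc F4t)
      then show "ctr (ein J (ein I Rp A) (ein I Ap R)) = ein J (ein I Rp A) (ein I Ap R)"
        using m3 by simp
      show "ctr (ein H (ein I Ap R) (ein I Rp A)) = ein H (ein I Ap R) (ein I Rp A)"
        by (simp add: ein_assoc F1 a4)
    qed
    have "B = ein G Tp (ein J T Ap)"
      unfolding B_def Tp_def[symmetric] using mpinv_eq[OF isB] by simp
    then have B: "B = Ap" using F4 by simp
    have "C = ein H (ein I Ap R) Rp"
      unfolding C_def Rp_def[symmetric] using mpinv_eq[OF isC] by simp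
    then have C: "C = Ap" using F3 by (simp add: ein_assoc)
    show ?thesis using B C by simp
  qed
  show ?thesis
    unfolding pm Ap_def[symmetric] Mp_def[symmetric] M_def[symmetric] Rp_def[symmetric] Tp_def[symmetric]
    using iff part2 by blast
qed

end
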